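(* Let $\Lambda=[\lambda_{\min},\lambda_{\max}]$, $F\in C^2(\Lambda)$, let $\lambda_b\in\{\lambda_{\min},\lambda_{\max}\}$ and let $\lambda_0=\lambda_b$, $\lambda_1,\lambda_2$ be the boundary node and the next two grid nodes moving into the interior, with $h_0=|\lambda_1-\lambda_0|$, $h_1=|\lambda_2-\lambda_1|$ and $h=\max(h_0,h_1)$. Let $d_0=\frac{F(\lambda_1)-F(\lambda_0)}{\lambda_1-\lambda_0}$, $d_1=\frac{F(\lambda_2)-F(\lambda_1)}{\lambda_2-\lambda_1}$, and let $m_b$ be the Fritsch–Carlson boundary slope: $m_b=\frac{(2h_0+h_1)d_0-h_0d_1}{h_0+h_1}$ if $d_0d_1>0$ and $m_b=0$ if $d_0d_1\le0$. Then $$|m_b-F'(\lambda_b)|\le C\,h\,\|F''\|_{\infty,\Lambda}$$ for a constant $C$ depending only on mesh regularity.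
   Context: $\|g\|_{\infty,\Lambda}=\sup_{\lambda\in\Lambda}|g(\lambda)|$. "Mesh regularity" refers to bounds on the ratios of neighbouring grid steps. *)

theory Defs
  imports "HOL-Analysis.Analysis"
begin

definition fc_boundary_slope :: "(real \<Rightarrow> real) \<Rightarrow> real \<Rightarrow> real \<Rightarrow> real \<Rightarrow> real" where
  "fc_boundary_slope F l0 l1 l2 =
     (let h0 = \<bar>l1 - l0\<bar>; h1 = \<bar>l2 - l1\<bar>;
          d0 = (F l1 - F l0) / (l1 - l0); d1 = (F l2 - F l1) / (l2 - l1)
      in if d0 * d1 > 0 then ((2*h0 + h1) * d0 - h0 * d1) / (h0 + h1) else 0)"

definition sup_norm_on :: "real set \<Rightarrow> (real \<Rightarrow> real) \<Rightarrow> real" where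
  "sup_norm_on S g = (SUP x\<in>S. \<bar>g x\<bar>)"

end

theory Submission
  imports Defs
begin

lemma mvt_sub:
  fixes f g :: "real \<Rightarrow> real"
  assumes d: "\<forall>x\<in>{lmin..lmax}. (f has_real_derivative g x) (at x within {lmin..lmax})"
    and "lmin \<le> a" "a < b" "b \<le> lmax"
  shows "\<exists>\<xi>\<in>{a..b}. f b - f a = g \<xi> * (b - a)"
proof -
  have "\<exists>x\<in>{a<..<b}. f b - f a = (*) (g x) (b - a)"
  proof (rule mvt_simple[OF assms(3)])
    fix x assume "a \<le> x" "x \<le> b"
    then have "(f has_real_derivative g x) (at x within {lmin..lmax})" using d assms by auto
    then have "(f has_real_derivative g x) (at x within {a..b})"
      by (rule has_field_derivative_subset) (use assms in auto)
    then show "(f has_derivative (*) (g x)) (at x within {a..b})"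
      by (simp add: has_field_derivative_def)
  qed
  then show ?thesis by auto
qed

lemma tri3: "\<bar>(d::real) + q - e\<bar> \<le> \<bar>e - d\<bar> + \<bar>q\<bar>"
  by arith

lemma core:
  fixes lb l1 l2 x0 x1 M d0 d1 e :: real
  assumes h0: "h0 > 0" and h1: "h1 > 0"
    and e0: "\<bar>e - d0\<bar> \<le> M * h0" and e1: "\<bar>d0 - d1\<bar> \<le> M * (h0 + h1)"
    and M: "M \<ge> 0"
  shows "\<bar>(if d0 * d1 > 0 then ((2*h0 + h1) * d0 - h0 * d1) / (h0 + h1) else 0) - e\<bar>
        \<le> 3 * max h0 h1 * M"
proof (cases "d0 * d1 > 0")
  case True
  have eq: "((2*h0 + h1) * d0 - h0 * d1) / (h0 + h1) = d0 + h0 / (h0 + h1) * (d0 - d1)"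
    using h0 h1 by (simp add: field_simps)
  have r: "0 \<le> h0 / (h0 + h1)" "h0 / (h0 + h1) \<le> 1" using h0 h1 by auto
  have T: "\<bar>h0 / (h0 + h1) * (d0 - d1)\<bar> \<le> 1 * (M * (h0 + h1))"
    unfolding abs_mult using r e1 h0 h1 by (intro mult_mono) auto
  moreover have "M * h0 \<le> max h0 h1 * M" "M * (h0 + h1) \<le> 2 * (max h0 h1 * M)"
    using M by (simp_all add: mult.commute mult_left_mono mult.left_commute[of 2])
  moreover have "\<bar>d0 + h0 / (h0 + h1) * (d0 - d1) - e\<bar> \<le> \<bar>e - d0\<bar> + \<bar>h0 / (h0 + h1) * (d0 - d1)\<bar>"
    by (rule tri3)
  moreover have "3 * max h0 h1 * M = 3 * (max h0 h1 * M)" by simp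
  ultimately have "\<bar>d0 + h0 / (h0 + h1) * (d0 - d1) - e\<bar> \<le> 3 * max h0 h1 * M"
    using T e0 by linarith
  then show ?thesis using True unfolding eq by simp
next
  case False
  have "\<bar>d0\<bar> \<le> \<bar>d0 - d1\<bar>"
    using False by (cases "d0 \<ge> 0"; cases "d1 \<ge> 0") (auto simp: mult_nonneg_nonneg mult_nonpos_nonpos not_less, (smt (verit) mult_pos_pos mult_neg_neg)+)
  moreover have "M * h0 \<le> max h0 h1 * M" "M * (h0 + h1) \<le> 2 * (max h0 h1 * M)"
    using M by (simp_all add: mult.commute mult_left_mono mult.left_commute[of 2])
  moreover have "3 * max h0 h1 * M = 3 * (max h0 h1 * M)" by simp
  ultimately have "\<bar>e\<bar> \<le> 3 * max h0 h1 * M" using e0 e1 by linarith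
  then show ?thesis using False by simp
qed

theorem mainTheorem14:
  fixes \<rho> :: real
  shows "\<exists>C. \<forall>(lmin::real) lmax (F::real\<Rightarrow>real) F1 F2 lb l1 l2.
    lmin < lmax \<longrightarrow>
    (\<forall>x\<in>{lmin..lmax}. (F has_real_derivative F1 x) (at x within {lmin..lmax})) \<longrightarrow>
    (\<forall>x\<in>{lmin..lmax}. (F1 has_real_derivative F2 x) (at x within {lmin..lmax})) \<longrightarrow>
    continuous_on {lmin..lmax} F2 \<longrightarrow>
    ((lb = lmin \<and> lb < l1 \<and> l1 < l2 \<and> l2 \<le> lmax) \<or>
     (lb = lmax \<and> lb > l1 \<and> l1 > l2 \<and> l2 \<ge> lmin)) \<longrightarrow>
    \<bar>l1 - lb\<bar> \<le> \<rho> * \<bar>l2 - l1\<bar> \<longrightarrow> \<bar>l2 - l1\<bar> \<le> \<rho> * \<bar>l1 - lb\<bar> \<longrightarrow>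
    \<bar>fc_boundary_slope F lb l1 l2 - F1 lb\<bar>
      \<le> C * max \<bar>l1 - lb\<bar> \<bar>l2 - l1\<bar> * sup_norm_on {lmin..lmax} F2"
proof (intro exI[of _ 3] allI impI)
  fix lmin lmax :: real and F F1 F2 :: "real \<Rightarrow> real" and lb l1 l2 :: real
  assume lt: "lmin < lmax"
    and dF: "\<forall>x\<in>{lmin..lmax}. (F has_real_derivative F1 x) (at x within {lmin..lmax})"
    and dF1: "\<forall>x\<in>{lmin..lmax}. (F1 has_real_derivative F2 x) (at x within {lmin..lmax})"
    and cF2: "continuous_on {lmin..lmax} F2"
    and pos: "(lb = lmin \<and> lb < l1 \<and> l1 < l2 \<and> l2 \<le> lmax) \<or>
     (lb = lmax \<and> lb > l1 \<and> l1 > l2 \<and> l2 \<ge> lmin)"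
  define M where "M = sup_norm_on {lmin..lmax} F2"
  have bdd: "bdd_above ((\<lambda>x. \<bar>F2 x\<bar>) ` {lmin..lmax})"
  proof -
    have "compact ((\<lambda>x. \<bar>F2 x\<bar>) ` {lmin..lmax})"
      by (intro compact_continuous_image continuous_intros cF2) simp
    then show ?thesis by (intro bounded_imp_bdd_above compact_imp_bounded)
  qed
  have Mb: "\<bar>F2 x\<bar> \<le> M" if "x \<in> {lmin..lmax}" for x
    unfolding M_def sup_norm_on_def by (rule cSUP_upper[OF that bdd])
  have M0: "M \<ge> 0" using Mb[of lmin] lt by auto
  have lip: "\<bar>F1 y - F1 x\<bar> \<le> M * \<bar>y - x\<bar>" if "x \<in> {lmin..lmax}" "y \<in> {lmin..lmax}" for x y
  proof -
    have *: "\<bar>F1 b - F1 a\<bar> \<le> M * \<bar>b - a\<bar>" if ab: "lmin \<le> a" "a < b" "b \<le> lmax" for a b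
    proof -
      obtain \<xi> where \<xi>: "\<xi> \<in> {a..b}" "F1 b - F1 a = F2 \<xi> * (b - a)"
        using mvt_sub[OF dF1 ab] by blast
      have "\<bar>F2 \<xi>\<bar> \<le> M" using \<xi>(1) ab by (intro Mb) auto
      then show ?thesis using \<xi>(2) ab by (simp add: abs_mult mult_right_mono)
    qed
    consider "x < y" | "x = y" | "y < x" by linarith
    then show ?thesis
    proof cases
      case 3 then show ?thesis using *[of y x] that by (simp add: abs_minus_commute)
    qed (use * that in auto)
  qed
  have mv: "\<exists>\<xi>\<in>{min a b..max a b}. (F b - F a) / (b - a) = F1 \<xi>"
    if ab: "a \<in> {lmin..lmax}" "b \<in> {lmin..lmax}" "a \<noteq> b" for a b
  proof (cases "a < b")
    case True
    then obtain \<xi> where "\<xi> \<in> {a..b}" "F b - F a = F1 \<xi> * (b - a)"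
      using mvt_sub[OF dF, of a b] ab by auto
    then show ?thesis using True by (intro bexI[of _ \<xi>]) auto
  next
    case False
    then have ba: "b < a" using ab by auto
    then obtain \<xi> where "\<xi> \<in> {b..a}" "F a - F b = F1 \<xi> * (a - b)"
      using mvt_sub[OF dF, of b a] ab by auto
    then show ?thesis using ba by (intro bexI[of _ \<xi>]) (auto simp: field_simps)
  qed
  define h0 where "h0 = \<bar>l1 - lb\<bar>"
  define h1 where "h1 = \<bar>l2 - l1\<bar>"
  define d0 where "d0 = (F l1 - F lb) / (l1 - lb)"
  define d1 where "d1 = (F l2 - F l1) / (l2 - l1)"
  have inI: "lb \<in> {lmin..lmax}" "l1 \<in> {lmin..lmax}" "l2 \<in> {lmin..lmax}" using pos lt by auto
  have ne: "lb \<noteq> l1" "l1 \<noteq> l2" using pos by auto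
  obtain x0 where x0: "x0 \<in> {min lb l1..max lb l1}" "d0 = F1 x0"
    using mv[OF inI(1,2) ne(1)] d0_def by auto
  obtain x1 where x1: "x1 \<in> {min l1 l2..max l1 l2}" "d1 = F1 x1"
    using mv[OF inI(2,3) ne(2)] d1_def by auto
  have x0I: "x0 \<in> {lmin..lmax}" and x1I: "x1 \<in> {lmin..lmax}" using x0 x1 inI by auto
  have dist0: "\<bar>lb - x0\<bar> \<le> h0" using x0(1) pos unfolding h0_def by auto
  have dist1: "\<bar>x0 - x1\<bar> \<le> h0 + h1" using x0(1) x1(1) pos unfolding h0_def h1_def by auto
  have e0: "\<bar>F1 lb - d0\<bar> \<le> M * h0"
    using lip[OF x0I inI(1)] dist0 M0 x0(2) by (smt (verit) mult_left_mono)
  have e1: "\<bar>d0 - d1\<bar> \<le> M * (h0 + h1)"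
    using lip[OF x1I x0I] dist1 M0 x0(2) x1(2) by (smt (verit) mult_left_mono)
  have "\<bar>fc_boundary_slope F lb l1 l2 - F1 lb\<bar> \<le> 3 * max h0 h1 * M"
    unfolding fc_boundary_slope_def Let_def h0_def[symmetric] h1_def[symmetric]
      d0_def[symmetric] d1_def[symmetric]
    by (rule core) (use ne e0 e1 M0 in \<open>auto simp: h0_def h1_def\<close>)
  then show "\<bar>fc_boundary_slope F lb l1 l2 - F1 lb\<bar>
      \<le> 3 * max \<bar>l1 - lb\<bar> \<bar>l2 - l1\<bar> * sup_norm_on {lmin..lmax} F2"
    by (simp add: h0_def h1_def M_def)
qed

end
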